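(* Let $t\in\mathbb N$, $\mathbb F_q$ of characteristic $2$, and for $i\in[t]$ let $\mathcal C_i=(C_i,\partial_i)$ be single-sector chain complexes with $n_i=\dim C_i$; let $\rho_i$ be the product-expansion of $(B_*(\mathcal C_1),\dots,B_*(\mathcal C_{i-1}),Z_*(\mathcal C_i))$. Let $$a\in\bigotimes_{i\in[t]}Z_*(\mathcal C_i)+\sum_{i\in[t]}B_*(\mathcal C_i)^{(i)}\subseteq C_1\otimes\cdots\otimes C_t,$$ and suppose there exist $z^i\in Z^*(\mathcal C_i)$, $i\in[t]$, with $\left(\bigotimes_{i\in[t]}z^i\right)\cdot a\neq0$. Then $|a|\ge\prod_{i\in[t]}(\rho_in_i)$.
   Context: Product-expansion: For codes $C_1\subseteq\mathbb F_q^{n_1},\dots,C_t\subseteq\mathbb F_q^{n_t}$, identify $\mathbb F_q^{n_1}\otimes\cdots\otimes\mathbb F_q^{n_t}$ with $t$-dimensional arrays; a direction-$i$ column is the vector in $\mathbb F_q^{n_i}$ obtained by fixing all coordinates except the $i$-th. $C^{(i)}$ is the space of arrays all of whose direction-$i$ columns lie in $C_i$, and $C_1\boxplus\cdots\boxplus C_t=C^{(1)}+\cdots+C^{(t)}$. $|c|$ is the number of nonzero entries, $|c|_i$ the number of nonzero direction-$i$ columns. The product-expansion of $(C_i)_{i\in[t]}$ is the largest $\rho\ge0$ such that every $c\in C_1\boxplus\cdots\boxplus C_t$ has a decomposition $c=c_1+\cdots+c_t$ with $c_i\in C^{(i)}$ and $|c|\ge\rho\sum_in_i|c_i|_i$.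 For a subspace $V\subseteq C_i$, $V^{(i)}$ similarly denotes arrays in $C_1\otimes\cdots\otimes C_t$ all of whose direction-$i$ columns lie in $V$. Single-sector complex: $\mathcal C=(C,\partial)$ with $C=\mathbb F_q^n$, $\partial^2=0$; $Z_*=\ker\partial$, $B_*=\operatorname{im}\partial$, $Z^*=\ker\partial^\top$. The dot product on arrays is the standard entrywise bilinear form. *)

theory Defs
  imports Complex_Main
begin

definition vecs :: "nat \<Rightarrow> (nat \<Rightarrow> 'a::zero) set" where
  "vecs n = {v. \<forall>j\<ge>n. v j = 0}"

definition matvec :: "nat \<Rightarrow> (nat \<Rightarrow> nat \<Rightarrow> 'a::comm_semiring_0) \<Rightarrow> (nat \<Rightarrow> 'a) \<Rightarrow> (nat \<Rightarrow> 'a)" where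
  "matvec n D v = (\<lambda>j. if j < n then (\<Sum>k<n. D j k * v k) else 0)"

definition transp_mat :: "(nat \<Rightarrow> nat \<Rightarrow> 'a) \<Rightarrow> (nat \<Rightarrow> nat \<Rightarrow> 'a)" where
  "transp_mat D = (\<lambda>j k. D k j)"

definition is_complex :: "nat \<Rightarrow> (nat \<Rightarrow> nat \<Rightarrow> 'a::comm_semiring_0) \<Rightarrow> bool" where
  "is_complex n D \<longleftrightarrow> (\<forall>v\<in>vecs n. matvec n D (matvec n D v) = (\<lambda>_. 0))"

definition Zlow :: "nat \<Rightarrow> (nat \<Rightarrow> nat \<Rightarrow> 'a::comm_semiring_0) \<Rightarrow> (nat \<Rightarrow> 'a) set" where
  "Zlow n D = {v\<in>vecs n. matvec n D v = (\<lambda>_. 0)}"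

definition Blow :: "nat \<Rightarrow> (nat \<Rightarrow> nat \<Rightarrow> 'a::comm_semiring_0) \<Rightarrow> (nat \<Rightarrow> 'a) set" where
  "Blow n D = matvec n D ` vecs n"

definition Zup :: "nat \<Rightarrow> (nat \<Rightarrow> nat \<Rightarrow> 'a::comm_semiring_0) \<Rightarrow> (nat \<Rightarrow> 'a) set" where
  "Zup n D = {v\<in>vecs n. matvec n (transp_mat D) v = (\<lambda>_. 0)}"

text \<open>t-dimensional arrays of shape n 0 x ... x n (t-1): index tuples are functions
  nat => nat with x i < n i for i < t and x i = 0 for i >= t.\<close>
definition box :: "nat \<Rightarrow> (nat \<Rightarrow> nat) \<Rightarrow> (nat \<Rightarrow> nat) set" where
  "box t n = {x. (\<forall>i<t. x i < n i) \<and> (\<forall>i\<ge>t. x i = 0)}"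

definition arrays :: "nat \<Rightarrow> (nat \<Rightarrow> nat) \<Rightarrow> ((nat \<Rightarrow> nat) \<Rightarrow> 'a::zero) set" where
  "arrays t n = {f. \<forall>x. x \<notin> box t n \<longrightarrow> f x = 0}"

definition col :: "(nat \<Rightarrow> nat) \<Rightarrow> ((nat \<Rightarrow> nat) \<Rightarrow> 'a::zero) \<Rightarrow> nat \<Rightarrow> (nat \<Rightarrow> nat) \<Rightarrow> (nat \<Rightarrow> 'a)" where
  "col n f i x = (\<lambda>j. if j < n i then f (x(i := j)) else 0)"

definition colspace :: "nat \<Rightarrow> (nat \<Rightarrow> nat) \<Rightarrow> nat \<Rightarrow> (nat \<Rightarrow> 'a::zero) set \<Rightarrow> ((nat \<Rightarrow> nat) \<Rightarrow> 'a) set" where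
  "colspace t n i V = {f\<in>arrays t n. \<forall>x\<in>box t n. col n f i x \<in> V}"

definition subsum :: "nat \<Rightarrow> (nat \<Rightarrow> ((nat \<Rightarrow> nat) \<Rightarrow> 'a::comm_monoid_add) set) \<Rightarrow> ((nat \<Rightarrow> nat) \<Rightarrow> 'a) set" where
  "subsum t S = {f. \<exists>g. (\<forall>i<t. g i \<in> S i) \<and> f = (\<lambda>x. \<Sum>i<t. g i x)}"

definition etensor :: "nat \<Rightarrow> (nat \<Rightarrow> nat) \<Rightarrow> (nat \<Rightarrow> nat \<Rightarrow> 'a::comm_semiring_1) \<Rightarrow> ((nat \<Rightarrow> nat) \<Rightarrow> 'a)" where
  "etensor t n z = (\<lambda>x. if x \<in> box t n then (\<Prod>i<t. z i (x i)) else 0)"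

text \<open>Tensor product of codes V 0 \<otimes> ... \<otimes> V (t-1): the span of elementary tensors
  (scalars are absorbed into a factor, codes being subspaces).\<close>
definition tensor_space :: "nat \<Rightarrow> (nat \<Rightarrow> nat) \<Rightarrow> (nat \<Rightarrow> (nat \<Rightarrow> 'a::comm_semiring_1) set) \<Rightarrow> ((nat \<Rightarrow> nat) \<Rightarrow> 'a) set" where
  "tensor_space t n V = {f. \<exists>(m::nat) zs. (\<forall>k<m. \<forall>i<t. zs k i \<in> V i) \<and>
       f = (\<lambda>x. \<Sum>k<m. etensor t n (zs k) x)}"

definition dot :: "nat \<Rightarrow> (nat \<Rightarrow> nat) \<Rightarrow> ((nat \<Rightarrow> nat) \<Rightarrow> 'a::comm_semiring_0) \<Rightarrow> ((nat \<Rightarrow> nat) \<Rightarrow> 'a) \<Rightarrow> 'a" where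
  "dot t n f g = (\<Sum>x\<in>box t n. f x * g x)"

definition weight :: "nat \<Rightarrow> (nat \<Rightarrow> nat) \<Rightarrow> ((nat \<Rightarrow> nat) \<Rightarrow> 'a::zero) \<Rightarrow> nat" where
  "weight t n c = card {x\<in>box t n. c x \<noteq> 0}"

definition colweight :: "nat \<Rightarrow> (nat \<Rightarrow> nat) \<Rightarrow> nat \<Rightarrow> ((nat \<Rightarrow> nat) \<Rightarrow> 'a::zero) \<Rightarrow> nat" where
  "colweight t n i c = card {x\<in>box t n. x i = 0 \<and> col n c i x \<noteq> (\<lambda>_. 0)}"

definition pe_good :: "nat \<Rightarrow> (nat \<Rightarrow> nat) \<Rightarrow> (nat \<Rightarrow> (nat \<Rightarrow> 'a::{comm_monoid_add}) set) \<Rightarrow> real \<Rightarrow> bool" where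
  "pe_good t n V \<rho> \<longleftrightarrow> 0 \<le> \<rho> \<and>
     (\<forall>c\<in>subsum t (\<lambda>i. colspace t n i (V i)).
        \<exists>cs. (\<forall>i<t. cs i \<in> colspace t n i (V i)) \<and> c = (\<lambda>x. \<Sum>i<t. cs i x) \<and>
             real (weight t n c) \<ge> \<rho> * (\<Sum>i<t. real (n i) * real (colweight t n i (cs i))))"

definition product_expansion :: "nat \<Rightarrow> (nat \<Rightarrow> nat) \<Rightarrow> (nat \<Rightarrow> (nat \<Rightarrow> 'a::{comm_monoid_add}) set) \<Rightarrow> real" where
  "product_expansion t n V = Sup {\<rho>. pe_good t n V \<rho>}"

end

theory Submission
  imports Defs
begin


lemma box_split_bij:
  assumes "i < t"
  shows "bij_betw (\<lambda>(y,j). y(i:=j)) (box t (n(i:=1)) \<times> {..<n i}) (box t n)"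
proof (rule bij_betwI')
  fix p q assume p: "p \<in> box t (n(i:=1)) \<times> {..<n i}" and q: "q \<in> box t (n(i:=1)) \<times> {..<n i}"
  obtain y j where pp: "p = (y,j)" by force
  obtain y' j' where qq: "q = (y',j')" by force
  have "y i = 0" "y' i = 0" using p q pp qq assms by (auto simp: box_def)
  show "((\<lambda>(y,j). y(i:=j)) p = (\<lambda>(y,j). y(i:=j)) q) = (p = q)"
  proof
    assume h: "(\<lambda>(y,j). y(i:=j)) p = (\<lambda>(y,j). y(i:=j)) q"
    hence "y(i:=j) = y'(i:=j')" using pp qq by simp
    hence eq: "y(i:=j) = y'(i:=j')" .
    have "j = j'" using fun_cong[OF eq, of i] by simp
    moreover have "y = y'"
    proof
      fix l show "y l = y' l" using fun_cong[OF eq, of l] \<open>y i = 0\<close> \<open>y' i = 0\<close> by (cases "l = i") auto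
    qed
    ultimately have "j = j'" "y = y'" by auto
    thus "p = q" using pp qq by simp
  qed simp
next
  fix p assume "p \<in> box t (n(i:=1)) \<times> {..<n i}"
  then show "(\<lambda>(y,j). y(i:=j)) p \<in> box t n" using assms
    by (auto simp: box_def split: prod.splits)
next
  fix x assume x: "x \<in> box t n"
  show "\<exists>p\<in>box t (n(i:=1)) \<times> {..<n i}. x = (\<lambda>(y,j). y(i:=j)) p"
    apply (rule bexI[of _ "(x(i:=0), x i)"])
    using x assms by (auto simp: box_def)
qed

lemma box_split_sum:
  assumes "i < t"
  shows "(\<Sum>x\<in>box t n. g x) = (\<Sum>y\<in>box t (n(i:=1)). \<Sum>j<n i. g (y(i:=j)))"
proof -
  have "(\<Sum>x\<in>box t n. g x) = (\<Sum>p\<in>box t (n(i:=1)) \<times> {..<n i}. g ((\<lambda>(y,j). y(i:=j)) p))"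
    using sum.reindex_bij_betw[OF box_split_bij[OF assms], of g] by simp
  also have "\<dots> = (\<Sum>y\<in>box t (n(i:=1)). \<Sum>j<n i. g (y(i:=j)))"
    by (simp add: sum.cartesian_product split_def)
  finally show ?thesis .
qed

lemma box_Suc: "box (Suc k) (n(k:=1)) = box k n"
  apply (auto simp: box_def less_Suc_eq)
  subgoal for x i by (cases "i = k") auto
  done

lemma finite_box: "finite (box t n)"
proof (induction t)
  case 0
  have "box 0 n \<subseteq> {\<lambda>_. 0}" by (auto simp: box_def)
  then show ?case using finite_subset by blast
next
  case (Suc k)
  have "box (Suc k) n = (\<lambda>(y,j). y(k:=j)) ` (box k n \<times> {..<n k})"
    using bij_betw_imp_surj_on[OF box_split_bij[of k "Suc k" n]] box_Suc by simp
  then show ?case using Suc by simp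
qed



definition subsp :: "(nat \<Rightarrow> 'a::field) set \<Rightarrow> bool" where
  "subsp V \<longleftrightarrow> (\<lambda>_. 0) \<in> V \<and> (\<forall>v\<in>V. \<forall>w\<in>V. (\<lambda>j. v j + w j) \<in> V) \<and> (\<forall>c. \<forall>v\<in>V. (\<lambda>j. c * v j) \<in> V)"

lemma subsp_zero: "subsp V \<Longrightarrow> (\<lambda>_. 0) \<in> V" by (simp add: subsp_def)
lemma subsp_add: "subsp V \<Longrightarrow> v \<in> V \<Longrightarrow> w \<in> V \<Longrightarrow> (\<lambda>j. v j + w j) \<in> V" by (simp add: subsp_def)
lemma subsp_smult: "subsp V \<Longrightarrow> v \<in> V \<Longrightarrow> (\<lambda>j. c * v j) \<in> V" by (simp add: subsp_def)
lemma subsp_diff: "subsp V \<Longrightarrow> v \<in> V \<Longrightarrow> w \<in> V \<Longrightarrow> (\<lambda>j. v j - w j) \<in> V"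
proof -
  assume a: "subsp V" "v \<in> V" "w \<in> V"
  have "(\<lambda>j. (-1) * w j) \<in> V" using a subsp_smult by blast
  from subsp_add[OF a(1,2) this] show ?thesis by simp
qed
lemma subsp_sum: "subsp V \<Longrightarrow> (\<And>m. m \<in> M \<Longrightarrow> f m \<in> V) \<Longrightarrow> (\<lambda>j. \<Sum>m\<in>M. f m j) \<in> V"
proof (induction M rule: infinite_finite_induct)
  case (infinite A) then show ?case by (simp add: subsp_zero)
next
  case empty then show ?case by (simp add: subsp_zero)
next
  case (insert x F)
  then show ?case using subsp_add[of V "f x" "\<lambda>j. \<Sum>m\<in>F. f m j"] by simp
qed

lemma vecs_add: "(v::nat\<Rightarrow>'a::field) \<in> vecs N \<Longrightarrow> w \<in> vecs N \<Longrightarrow> (\<lambda>j. v j + w j) \<in> vecs N" by (simp add: vecs_def)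
lemma vecs_smult: "(v::nat\<Rightarrow>'a::field) \<in> vecs N \<Longrightarrow> (\<lambda>j. c * v j) \<in> vecs N" by (simp add: vecs_def)

lemma matvec_add: "matvec N D (\<lambda>j. v j + w j) = (\<lambda>j. matvec N D v j + matvec N D w j)"
  by (auto simp: matvec_def distrib_left sum.distrib)
lemma matvec_smult: "matvec N D (\<lambda>j. (c::'a::field) * v j) = (\<lambda>j. c * matvec N D v j)"
  by (auto simp: matvec_def sum_distrib_left algebra_simps)
lemma matvec_vecs: "matvec N D v \<in> vecs N" by (simp add: matvec_def vecs_def)

lemma subsp_Zlow: "subsp (Zlow N (D::nat\<Rightarrow>nat\<Rightarrow>'a::field))"
  unfolding subsp_def Zlow_def
  by (auto simp: vecs_def matvec_add matvec_smult) (auto simp: matvec_def)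

lemma subsp_Blow: "subsp (Blow N (D::nat\<Rightarrow>nat\<Rightarrow>'a::field))"
  unfolding subsp_def Blow_def
proof (intro conjI ballI allI)
  show "(\<lambda>_. 0) \<in> matvec N D ` vecs N"
    by (rule image_eqI[of _ _ "\<lambda>_. 0"]) (auto simp: matvec_def vecs_def)
next
  fix v w assume "v \<in> matvec N D ` vecs N" "w \<in> matvec N D ` vecs N"
  then obtain v' w' where "v' \<in> vecs N" "w' \<in> vecs N" "v = matvec N D v'" "w = matvec N D w'" by auto
  then show "(\<lambda>j. v j + w j) \<in> matvec N D ` vecs N"
    by (intro image_eqI[of _ _ "\<lambda>j. v' j + w' j"]) (auto simp: matvec_add vecs_add)
next
  fix c v assume "v \<in> matvec N D ` vecs N"
  then obtain v' where "v' \<in> vecs N" "v = matvec N D v'" by auto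
  then show "(\<lambda>j. c * v j) \<in> matvec N D ` vecs N"
    by (intro image_eqI[of _ _ "\<lambda>j. c * v' j"]) (auto simp: matvec_smult vecs_smult)
qed

lemma Blow_Zlow: "is_complex N D \<Longrightarrow> Blow N D \<subseteq> Zlow N D"
  by (auto simp: is_complex_def Blow_def Zlow_def matvec_vecs)

lemma Zup_vecs: "Zup N D \<subseteq> vecs N" by (auto simp: Zup_def)
lemma Zlow_vecs: "Zlow N D \<subseteq> vecs N" by (auto simp: Zlow_def)

lemma orth:
  assumes "z \<in> Zup N (D::nat\<Rightarrow>nat\<Rightarrow>'a::field)" "w \<in> Blow N D"
  shows "(\<Sum>l<N. z l * w l) = 0"
proof -
  obtain v where v: "v \<in> vecs N" "w = matvec N D v" using assms(2) by (auto simp: Blow_def)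
  have zt: "\<And>m. m < N \<Longrightarrow> (\<Sum>l<N. D l m * z l) = 0"
  proof -
    fix m assume "m < N"
    have "matvec N (transp_mat D) z m = 0" using assms(1) by (simp add: Zup_def)
    then show "(\<Sum>l<N. D l m * z l) = 0" using \<open>m < N\<close> by (simp add: matvec_def transp_mat_def)
  qed
  have "(\<Sum>l<N. z l * w l) = (\<Sum>l<N. \<Sum>m<N. z l * (D l m * v m))"
    by (simp add: v matvec_def sum_distrib_left)
  also have "\<dots> = (\<Sum>m<N. \<Sum>l<N. z l * (D l m * v m))" by (rule sum.swap)
  also have "\<dots> = (\<Sum>m<N. v m * (\<Sum>l<N. D l m * z l))"
    by (simp add: sum_distrib_left algebra_simps)
  also have "\<dots> = 0" using zt by simp
  finally show ?thesis .
qed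

lemma col_add: "col n (\<lambda>x. (f x::'a::field) + g x) i x = (\<lambda>j. col n f i x j + col n g i x j)"
  by (rule ext) (simp add: col_def)
lemma col_smult: "col n (\<lambda>x. (c::'a::field) * f x) i x = (\<lambda>j. c * col n f i x j)"
  by (rule ext) (simp add: col_def)
lemma col_sum: "col n (\<lambda>x. \<Sum>m\<in>M. (f m x::'a::field)) i x = (\<lambda>j. \<Sum>m\<in>M. col n (f m) i x j)"
  by (rule ext) (simp add: col_def)

lemma colspace_add: "subsp V \<Longrightarrow> f \<in> colspace t n i V \<Longrightarrow> g \<in> colspace t n i V \<Longrightarrow>
   (\<lambda>x. f x + g x) \<in> colspace t n i V"
  by (auto simp: colspace_def arrays_def col_add subsp_add)
lemma colspace_diff: "subsp V \<Longrightarrow> f \<in> colspace t n i V \<Longrightarrow> g \<in> colspace t n i V \<Longrightarrow>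
   (\<lambda>x. f x - g x) \<in> colspace t n i V"
proof -
  assume a: "subsp V" "f \<in> colspace t n i V" "g \<in> colspace t n i V"
  have "col n (\<lambda>x. f x - g x) i x = (\<lambda>j. col n f i x j - col n g i x j)" for x
    by (auto simp: col_def)
  then show ?thesis using a by (auto simp: colspace_def arrays_def subsp_diff)
qed
lemma colspace_smult: "subsp V \<Longrightarrow> f \<in> colspace t n i V \<Longrightarrow> (\<lambda>x. c * f x) \<in> colspace t n i V"
  by (auto simp: colspace_def arrays_def col_smult subsp_smult)
lemma colspace_sum: "subsp V \<Longrightarrow> (\<And>m. m \<in> M \<Longrightarrow> f m \<in> colspace t n i V) \<Longrightarrow>
   (\<lambda>x. \<Sum>m\<in>M. f m x) \<in> colspace t n i V"
  by (auto simp: colspace_def arrays_def col_sum intro!: subsp_sum)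
lemma colspace_mono: "V \<subseteq> W \<Longrightarrow> colspace t n i V \<subseteq> colspace t n i W"
  by (auto simp: colspace_def)

lemma etensor_col:
  assumes "i < t" "x \<in> box t n" "zs i \<in> vecs (n i)"
  shows "col n (etensor t n zs) i x = (\<lambda>j. (\<Prod>l\<in>{..<t}-{i}. zs l (x l)) * zs i j)"
proof
  fix j
  show "col n (etensor t n zs) i x j = (\<Prod>l\<in>{..<t}-{i}. zs l (x l)) * zs i j"
  proof (cases "j < n i")
    case True
    have xb: "x(i:=j) \<in> box t n" using assms True by (auto simp: box_def)
    have "(\<Prod>l<t. zs l ((x(i:=j)) l)) = zs l ((x(i:=j)) i) * (\<Prod>l\<in>{..<t}-{i}. zs l ((x(i:=j)) l))" if "l = i" for l
      using that assms(1) by (simp add: prod.remove)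
    moreover have "(\<Prod>l\<in>{..<t}-{i}. zs l ((x(i:=j)) l)) = (\<Prod>l\<in>{..<t}-{i}. zs l (x l))"
      by (rule prod.cong) auto
    ultimately show ?thesis using True xb by (simp add: col_def etensor_def mult.commute)
  next
    case False
    then show ?thesis using assms(3) by (simp add: col_def vecs_def)
  qed
qed



definition contr :: "nat \<Rightarrow> (nat \<Rightarrow> nat) \<Rightarrow> (nat \<Rightarrow> 'a::field) \<Rightarrow> ((nat\<Rightarrow>nat) \<Rightarrow> 'a) \<Rightarrow> ((nat\<Rightarrow>nat) \<Rightarrow> 'a)" where
  "contr k n w f = (\<lambda>y. if y \<in> box k n then (\<Sum>l<n k. w l * f (y(k:=l))) else 0)"

lemma contr_arrays: "contr k n w f \<in> arrays k n"
  by (simp add: contr_def arrays_def)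

lemma contr_add: "contr k n w (\<lambda>x. f x + g x) = (\<lambda>x. contr k n w f x + contr k n w g x)"
  by (rule ext) (simp add: contr_def distrib_left sum.distrib)

lemma contr_sum: "contr k n w (\<lambda>x. \<Sum>m\<in>M. f m x) = (\<lambda>x. \<Sum>m\<in>M. contr k n w (f m) x)"
  by (rule ext) (simp add: contr_def sum_distrib_left sum.swap[of _ M])

lemma box_upd_Suc: fixes n :: "nat \<Rightarrow> nat" shows "y \<in> box k n \<Longrightarrow> l < n k \<Longrightarrow> y(k:=l) \<in> box (Suc k) n"
  by (auto simp: box_def)

lemma dot_contr:
  fixes n :: "nat \<Rightarrow> nat" and z :: "nat \<Rightarrow> nat \<Rightarrow> 'a::field" and f :: "(nat\<Rightarrow>nat) \<Rightarrow> 'a"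
  shows "dot (Suc k) n (etensor (Suc k) n z) f = dot k n (etensor k n z) (contr k n (z k) f)"
proof -
  have "dot (Suc k) n (etensor (Suc k) n z) f =
      (\<Sum>y\<in>box k n. \<Sum>j<n k. etensor (Suc k) n z (y(k:=j)) * f (y(k:=j)))"
    unfolding dot_def using box_split_sum[where i=k and t="Suc k" and n=n] box_Suc by simp
  also have "\<dots> = (\<Sum>y\<in>box k n. etensor k n z y * contr k n (z k) f y)"
  proof (rule sum.cong[OF refl])
    fix y assume y: "y \<in> box k n"
    have "etensor (Suc k) n z (y(k:=j)) = etensor k n z y * z k j" if "j < n k" for j
    proof -
      have "(\<Prod>i<k. z i ((y(k:=j)) i)) = (\<Prod>i<k. z i (y i))" by (rule prod.cong) auto
      then show ?thesis using box_upd_Suc[OF y that] y by (simp add: etensor_def)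
    qed
    then show "(\<Sum>j<n k. etensor (Suc k) n z (y(k:=j)) * f (y(k:=j))) = etensor k n z y * contr k n (z k) f y"
      using y by (simp add: contr_def sum_distrib_left mult.assoc)
  qed
  finally show ?thesis by (simp add: dot_def)
qed

lemma dot_sum: "dot t n e (\<lambda>x. \<Sum>i\<in>I. g i x) = (\<Sum>i\<in>I. dot t n e (g i))"
  by (simp add: dot_def sum_distrib_left sum.swap[of _ I])

lemma dot_orth:
  assumes "i < t" "z i \<in> Zup (n i) (D::nat\<Rightarrow>nat\<Rightarrow>'a::field)" "f \<in> colspace t n i (Blow (n i) D)"
  shows "dot t n (etensor t n z) f = 0"
proof -
  have "dot t n (etensor t n z) f = (\<Sum>y\<in>box t (n(i:=1)). \<Sum>j<n i. etensor t n z (y(i:=j)) * f (y(i:=j)))"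
    unfolding dot_def using box_split_sum[OF assms(1)] by simp
  also have "\<dots> = 0"
  proof (rule sum.neutral, rule ballI)
    fix y assume y: "y \<in> box t (n(i:=1))"
    show "(\<Sum>j<n i. etensor t n z (y(i:=j)) * f (y(i:=j))) = 0"
    proof (cases "n i = 0")
      case False
      have yb: "y \<in> box t n" using y False assms(1) by (auto simp: box_def split: if_splits)
      have zv: "z i \<in> vecs (n i)" using assms(2) Zup_vecs by blast
      have "etensor t n z (y(i:=j)) = (\<Prod>l\<in>{..<t}-{i}. z l (y l)) * z i j" if "j < n i" for j
        using fun_cong[OF etensor_col[where x=y and zs=z, OF assms(1) yb zv], of j] that by (simp add: col_def)
      moreover have "f (y(i:=j)) = col n f i y j" if "j < n i" for j using that by (simp add: col_def)
      ultimately have "(\<Sum>j<n i. etensor t n z (y(i:=j)) * f (y(i:=j))) =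
          (\<Prod>l\<in>{..<t}-{i}. z l (y l)) * (\<Sum>j<n i. z i j * col n f i y j)"
        by (simp add: sum_distrib_left mult.assoc)
      also have "\<dots> = 0" using orth[OF assms(2)] assms(3) yb by (simp add: colspace_def)
      finally show ?thesis .
    qed simp
  qed
  finally show ?thesis .
qed

lemma contr_colspace:
  assumes "i < k" "subsp V" "f \<in> colspace (Suc k) n i V"
  shows "contr k n w f \<in> colspace k n i V"
proof -
  have "col n (contr k n w f) i y = (\<lambda>j. \<Sum>l<n k. w l * col n f i (y(k:=l)) j)" if y: "y \<in> box k n" for y
  proof
    fix j
    show "col n (contr k n w f) i y j = (\<Sum>l<n k. w l * col n f i (y(k:=l)) j)"
    proof (cases "j < n i")
      case True
      have "y(i:=j) \<in> box k n" using y True assms(1) by (auto simp: box_def)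
      moreover have "\<And>l. y(i:=j, k:=l) = y(k:=l, i:=j)" using assms(1) by (auto simp: fun_upd_twist)
      ultimately show ?thesis using True by (simp add: col_def contr_def)
    qed (simp add: col_def)
  qed
  moreover have "(\<lambda>j. \<Sum>l<n k. w l * col n f i (y(k:=l)) j) \<in> V" if y: "y \<in> box k n" for y
    using assms box_upd_Suc[OF y]
    by (intro subsp_sum[OF assms(2)] subsp_smult[OF assms(2)]) (auto simp: colspace_def)
  ultimately show ?thesis by (auto simp: colspace_def contr_arrays)
qed

lemma contr_colspace_last:
  assumes "w \<in> Zup (n k) D" "f \<in> colspace (Suc k) n k (Blow (n k) D)"
  shows "contr k n w f = (\<lambda>_. 0)"
proof
  fix y show "contr k n w f y = 0"
  proof (cases "y \<in> box k n \<and> n k > 0")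
    case True
    then have yb: "y \<in> box (Suc k) n" by (auto simp: box_def less_Suc_eq)
    have "(\<Sum>l<n k. w l * f (y(k:=l))) = (\<Sum>l<n k. w l * col n f k y l)" by (simp add: col_def)
    also have "\<dots> = 0" using orth[OF assms(1)] assms(2) yb by (simp add: colspace_def)
    finally show ?thesis using True by (simp add: contr_def)
  qed (auto simp: contr_def)
qed

lemma contr_etensor:
  "contr k n w (etensor (Suc k) n zs) = (\<lambda>y. (\<Sum>l<n k. w l * zs k l) * etensor k n zs y)"
proof
  fix y show "contr k n w (etensor (Suc k) n zs) y = (\<Sum>l<n k. w l * zs k l) * etensor k n zs y"
  proof (cases "y \<in> box k n")
    case True
    have "etensor (Suc k) n zs (y(k:=l)) = etensor k n zs y * zs k l" if "l < n k" for l
    proof -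
      have "(\<Prod>i<k. zs i ((y(k:=l)) i)) = (\<Prod>i<k. zs i (y i))" by (rule prod.cong) auto
      then show ?thesis using box_upd_Suc[OF True that] True by (simp add: etensor_def)
    qed
    then show ?thesis using True by (simp add: contr_def sum_distrib_left sum_distrib_right mult_ac)
  qed (simp add: contr_def etensor_def)
qed

lemma etensor_scale:
  assumes "0 < k"
  shows "etensor k n (zs(0 := (\<lambda>j. c * zs 0 j))) = (\<lambda>y. (c::'a::field) * etensor k n zs y)"
proof
  fix y
  have z: "0 \<in> {..<k}" using assms by simp
  have "(\<Prod>i<k. (zs(0 := (\<lambda>j. c * zs 0 j))) i (y i)) =
     (zs(0 := (\<lambda>j. c * zs 0 j))) 0 (y 0) * (\<Prod>i\<in>{..<k}-{0}. (zs(0 := (\<lambda>j. c * zs 0 j))) i (y i))"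
    using prod.remove[OF _ z] by blast
  also have "\<dots> = c * (zs 0 (y 0) * (\<Prod>i\<in>{..<k}-{0}. zs i (y i)))"
    by (simp add: mult.assoc)
  also have "zs 0 (y 0) * (\<Prod>i\<in>{..<k}-{0}. zs i (y i)) = (\<Prod>i<k. zs i (y i))"
    using prod.remove[OF _ z, of "\<lambda>i. zs i (y i)"] by simp
  finally show "etensor k n (zs(0 := (\<lambda>j. c * zs 0 j))) y = c * etensor k n zs y"
    by (simp add: etensor_def)
qed

lemma weight_contr:
  assumes "n k > 0"
  shows "weight k n (contr k n w f) \<le> colweight (Suc k) n k f"
  unfolding weight_def colweight_def
proof (rule card_mono)
  show "finite {x \<in> box (Suc k) n. x k = 0 \<and> col n f k x \<noteq> (\<lambda>_. 0)}" using finite_box by simp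
  show "{x \<in> box k n. contr k n w f x \<noteq> 0} \<subseteq> {x \<in> box (Suc k) n. x k = 0 \<and> col n f k x \<noteq> (\<lambda>_. 0)}"
  proof
    fix y assume "y \<in> {x \<in> box k n. contr k n w f x \<noteq> 0}"
    then have y: "y \<in> box k n" "contr k n w f y \<noteq> 0" by auto
    have "y \<in> box (Suc k) n" "y k = 0" using y(1) assms by (auto simp: box_def less_Suc_eq)
    moreover have "col n f k y \<noteq> (\<lambda>_. 0)"
    proof
      assume "col n f k y = (\<lambda>_. 0)"
      then have "\<And>l. l < n k \<Longrightarrow> f (y(k:=l)) = 0" by (metis col_def)
      then show False using y by (simp add: contr_def)
    qed
    ultimately show "y \<in> {x \<in> box (Suc k) n. x k = 0 \<and> col n f k x \<noteq> (\<lambda>_. 0)}" by simp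
  qed
qed

lemma weight_ge1:
  assumes "dot t n e (b::(nat\<Rightarrow>nat)\<Rightarrow>'a::field) \<noteq> 0"
  shows "1 \<le> weight t n b"
proof -
  obtain x where "x \<in> box t n" "b x \<noteq> 0" using assms unfolding dot_def
    by (metis (mono_tags, lifting) mult_zero_right sum.neutral)
  then have "{x \<in> box t n. b x \<noteq> 0} \<noteq> {}" by auto
  then show ?thesis unfolding weight_def using finite_box
    by (metis (no_types, lifting) One_nat_def Suc_leI card_gt_0_iff finite_subset mem_Collect_eq subsetI)
qed



definition Aset :: "nat \<Rightarrow> (nat \<Rightarrow> nat) \<Rightarrow> (nat \<Rightarrow> nat \<Rightarrow> nat \<Rightarrow> 'a::field) \<Rightarrow> ((nat \<Rightarrow> nat) \<Rightarrow> 'a) set" where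
  "Aset t n d = {(\<lambda>x. u x + v x) | u v. u \<in> tensor_space t n (\<lambda>i. Zlow (n i) (d i)) \<and>
                          v \<in> subsum t (\<lambda>i. colspace t n i (Blow (n i) (d i)))}"

lemma step_mem:
  fixes n :: "nat \<Rightarrow> nat" and d :: "nat \<Rightarrow> nat \<Rightarrow> nat \<Rightarrow> 'a::field"
    and z :: "nat \<Rightarrow> nat \<Rightarrow> 'a" and a :: "(nat\<Rightarrow>nat) \<Rightarrow> 'a"
  assumes zz: "\<forall>i<Suc k. z i \<in> Zup (n i) (d i)"
    and aA: "a \<in> Aset (Suc k) n d"
    and cs: "\<forall>i<k. cs i \<in> colspace (Suc k) n i (Blow (n i) (d i))"
    and asum: "a = (\<lambda>x. \<Sum>i<Suc k. cs i x)"
    and k0: "0 < k"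
  shows "contr k n (z k) (cs k) \<in> Aset k n d"
proof -
  let ?C = "contr k n (z k)"
  obtain u v where a: "a = (\<lambda>x. u x + v x)" and u: "u \<in> tensor_space (Suc k) n (\<lambda>i. Zlow (n i) (d i))"
    and v: "v \<in> subsum (Suc k) (\<lambda>i. colspace (Suc k) n i (Blow (n i) (d i)))"
    using aA unfolding Aset_def by blast
  obtain M :: nat and zs where zs: "\<forall>m<M. \<forall>i<Suc k. zs m i \<in> Zlow (n i) (d i)"
    and uu: "u = (\<lambda>x. \<Sum>m<M. etensor (Suc k) n (zs m) x)"
    using u unfolding tensor_space_def mem_Collect_eq by auto
  obtain g where g: "\<forall>i<Suc k. g i \<in> colspace (Suc k) n i (Blow (n i) (d i))"
    and vv: "v = (\<lambda>x. \<Sum>i<Suc k. g i x)"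
    using v unfolding subsum_def by blast
  define c where "c m = (\<Sum>l<n k. z k l * zs m k l)" for m
  define zs' where "zs' m = (zs m)(0 := (\<lambda>j. c m * zs m 0 j))" for m
  have Cu: "?C u = (\<lambda>x. \<Sum>m<M. etensor k n (zs' m) x)"
    unfolding uu contr_sum contr_etensor zs'_def
    by (simp add: c_def etensor_scale[OF k0])
  have gk: "?C (g k) = (\<lambda>_. 0)" using contr_colspace_last[of "z k" n k "d k" "g k"] zz g by simp
  have Ca1: "?C a = (\<lambda>x. ?C u x + (\<Sum>i<k. ?C (g i) x))"
    unfolding a vv contr_add contr_sum using gk by simp
  have Ca2: "?C a = (\<lambda>x. (\<Sum>i<k. ?C (cs i) x) + ?C (cs k) x)"
    unfolding asum contr_sum by simp
  have b: "?C (cs k) = (\<lambda>x. ?C u x + (\<Sum>i<k. ?C (g i) x - ?C (cs i) x))"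
  proof
    fix x
    have "?C u x + (\<Sum>i<k. ?C (g i) x) = (\<Sum>i<k. ?C (cs i) x) + ?C (cs k) x"
      using fun_cong[OF Ca1, of x] fun_cong[OF Ca2, of x] by simp
    then show "?C (cs k) x = ?C u x + (\<Sum>i<k. ?C (g i) x - ?C (cs i) x)"
      by (simp add: sum_subtractf algebra_simps)
  qed
  have t: "?C u \<in> tensor_space k n (\<lambda>i. Zlow (n i) (d i))"
    unfolding tensor_space_def
  proof (intro CollectI exI conjI allI impI)
    fix m i assume "m < M" "i < k"
    then have "zs m i \<in> Zlow (n i) (d i)" using zs by simp
    then show "zs' m i \<in> Zlow (n i) (d i)"
      using subsp_smult[OF subsp_Zlow] by (cases "i = 0") (auto simp: zs'_def)
  qed (rule Cu)
  have s: "(\<lambda>x. \<Sum>i<k. ?C (g i) x - ?C (cs i) x) \<in> subsum k (\<lambda>i. colspace k n i (Blow (n i) (d i)))"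
    unfolding subsum_def
    apply (intro CollectI exI[of _ "\<lambda>i x. ?C (g i) x - ?C (cs i) x"] conjI allI impI)
     apply (rule colspace_diff[OF subsp_Blow])
    using g cs by (auto intro!: contr_colspace[OF _ subsp_Blow])
  show ?thesis unfolding Aset_def
    by (subst b, rule CollectI, intro exI conjI, rule refl, rule t, rule s)
qed

lemma step_dot:
  fixes n :: "nat \<Rightarrow> nat" and d :: "nat \<Rightarrow> nat \<Rightarrow> nat \<Rightarrow> 'a::field"
    and z :: "nat \<Rightarrow> nat \<Rightarrow> 'a" and a :: "(nat\<Rightarrow>nat) \<Rightarrow> 'a"
  assumes zz: "\<forall>i<Suc k. z i \<in> Zup (n i) (d i)"
    and cs: "\<forall>i<k. cs i \<in> colspace (Suc k) n i (Blow (n i) (d i))"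
    and asum: "a = (\<lambda>x. \<Sum>i<Suc k. cs i x)"
  shows "dot k n (etensor k n z) (contr k n (z k) (cs k)) = dot (Suc k) n (etensor (Suc k) n z) a"
proof -
  have "dot (Suc k) n (etensor (Suc k) n z) a = (\<Sum>i<Suc k. dot (Suc k) n (etensor (Suc k) n z) (cs i))"
    unfolding asum dot_sum ..
  also have "\<dots> = dot (Suc k) n (etensor (Suc k) n z) (cs k)"
  proof -
    have "\<forall>i<k. dot (Suc k) n (etensor (Suc k) n z) (cs i) = 0"
    proof (intro allI impI)
      fix i assume i: "i < k"
      have "i < Suc k" using i by simp
      moreover have "z i \<in> Zup (n i) (d i)" using zz i by simp
      moreover have "cs i \<in> colspace (Suc k) n i (Blow (n i) (d i))" using cs i by simp
      ultimately show "dot (Suc k) n (etensor (Suc k) n z) (cs i) = 0" by (rule dot_orth)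
    qed
    then show ?thesis by simp
  qed
  finally show ?thesis using dot_contr by metis
qed



lemma etensor_colspace:
  assumes "i < t" "subsp V" "V \<subseteq> vecs (n i)" "zs i \<in> V"
  shows "etensor t n zs \<in> colspace t n i V"
  unfolding colspace_def
proof (intro CollectI conjI ballI)
  show "etensor t n zs \<in> arrays t n" by (simp add: arrays_def etensor_def)
  fix x assume x: "x \<in> box t n"
  show "col n (etensor t n zs) i x \<in> V"
  proof -
    have zv: "zs i \<in> vecs (n i)" using assms(3,4) by blast
    show ?thesis unfolding etensor_col[where zs=zs and n=n, OF assms(1) x zv] by (rule subsp_smult[OF assms(2,4)])
  qed
qed

lemma main:
  fixes n :: "nat \<Rightarrow> nat" and d :: "nat \<Rightarrow> nat \<Rightarrow> nat \<Rightarrow> 'a::field"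
    and z :: "nat \<Rightarrow> nat \<Rightarrow> 'a" and a :: "(nat\<Rightarrow>nat) \<Rightarrow> 'a"
  shows "(\<forall>i<t. is_complex (n i) (d i)) \<Longrightarrow> (\<forall>i<t. z i \<in> Zup (n i) (d i)) \<Longrightarrow>
    (0 < t \<longrightarrow> a \<in> Aset t n d) \<Longrightarrow> dot t n (etensor t n z) a \<noteq> 0 \<Longrightarrow>
    real (weight t n a) \<ge>
    (\<Prod>i<t. product_expansion (Suc i) n
               (\<lambda>j. if j < i then Blow (n j) (d j) else Zlow (n j) (d j)) * real (n i))"
proof (induction t arbitrary: a)
  case 0
  then show ?case using weight_ge1[OF "0.prems"(4)] by simp
next
  case (Suc k)
  define V where "V = (\<lambda>j. if j < k then Blow (n j) (d j) else Zlow (n j) (d j))"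
  define S where "S = {\<rho>. pe_good (Suc k) n V \<rho>}"
  define P where "P = (\<Prod>i<k. product_expansion (Suc i) n
               (\<lambda>j. if j < i then Blow (n j) (d j) else Zlow (n j) (d j)) * real (n i))"
  define W where "W = real (weight (Suc k) n a)"
  have cx: "\<forall>i<Suc k. is_complex (n i) (d i)" and zz: "\<forall>i<Suc k. z i \<in> Zup (n i) (d i)"
    and aA: "a \<in> Aset (Suc k) n d" and dt: "dot (Suc k) n (etensor (Suc k) n z) a \<noteq> 0"
    using Suc.prems by simp_all
  have nk: "0 < n k"
  proof -
    have "box (Suc k) n \<noteq> {}" using dt unfolding dot_def by auto
    then obtain x where "x \<in> box (Suc k) n" by blast
    then show ?thesis by (auto simp: box_def)
  qed
  have asub: "a \<in> subsum (Suc k) (\<lambda>i. colspace (Suc k) n i (V i))"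
  proof -
    obtain u v where a: "a = (\<lambda>x. u x + v x)" and u: "u \<in> tensor_space (Suc k) n (\<lambda>i. Zlow (n i) (d i))"
      and v: "v \<in> subsum (Suc k) (\<lambda>i. colspace (Suc k) n i (Blow (n i) (d i)))"
      using aA unfolding Aset_def by blast
    obtain M :: nat and zs where zs: "\<forall>m<M. \<forall>i<Suc k. zs m i \<in> Zlow (n i) (d i)"
      and uu: "u = (\<lambda>x. \<Sum>m<M. etensor (Suc k) n (zs m) x)"
      using u unfolding tensor_space_def mem_Collect_eq by auto
    obtain g where g: "\<forall>i<Suc k. g i \<in> colspace (Suc k) n i (Blow (n i) (d i))"
      and vv: "v = (\<lambda>x. \<Sum>i<Suc k. g i x)"
      using v unfolding subsum_def by blast
    have uc: "u \<in> colspace (Suc k) n k (Zlow (n k) (d k))"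
      unfolding uu
      by (rule colspace_sum[OF subsp_Zlow], rule etensor_colspace[OF _ subsp_Zlow Zlow_vecs])
         (use zs in auto)
    have gk: "g k \<in> colspace (Suc k) n k (Zlow (n k) (d k))"
    proof -
      have "g k \<in> colspace (Suc k) n k (Blow (n k) (d k))" using g by simp
      moreover have "is_complex (n k) (d k)" using cx by simp
      ultimately show ?thesis using colspace_mono[OF Blow_Zlow] by blast
    qed
    define cs where "cs i = (if i = k then (\<lambda>x. u x + g k x) else g i)" for i
    have "\<forall>i<Suc k. cs i \<in> colspace (Suc k) n i (V i)"
    proof (intro allI impI)
      fix i assume i: "i < Suc k"
      show "cs i \<in> colspace (Suc k) n i (V i)"
      proof (cases "i = k")
        case True then show ?thesis using colspace_add[OF subsp_Zlow uc gk] by (simp add: cs_def V_def)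
      next
        case False then have "i < k" using i by simp
        then show ?thesis using g by (simp add: cs_def V_def)
      qed
    qed
    moreover have "a = (\<lambda>x. \<Sum>i<Suc k. cs i x)"
    proof
      fix x
      have "(\<Sum>i<Suc k. cs i x) = (\<Sum>i<k. g i x) + (u x + g k x)"
        by (simp add: cs_def)
      then show "a x = (\<Sum>i<Suc k. cs i x)" by (simp add: a vv add_ac)
    qed
    ultimately show ?thesis unfolding subsum_def by (intro CollectI exI[of _ cs] conjI)
  qed
  have key: "0 \<le> \<rho> \<and> (\<exists>w::real. P \<le> w \<and> 1 \<le> w \<and> \<rho> * real (n k) * w \<le> W)" if rS: "\<rho> \<in> S" for \<rho>
  proof -
    have r0: "0 \<le> \<rho>" using rS by (simp add: S_def pe_good_def)
    have "\<forall>c\<in>subsum (Suc k) (\<lambda>i. colspace (Suc k) n i (V i)).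
        \<exists>cs. (\<forall>i<Suc k. cs i \<in> colspace (Suc k) n i (V i)) \<and> c = (\<lambda>x. \<Sum>i<Suc k. cs i x) \<and>
             real (weight (Suc k) n c) \<ge> \<rho> * (\<Sum>i<Suc k. real (n i) * real (colweight (Suc k) n i (cs i)))"
      using rS unfolding S_def pe_good_def by simp
    from this[rule_format, OF asub] obtain cs where cs: "\<forall>i<Suc k. cs i \<in> colspace (Suc k) n i (V i)"
      and asum: "a = (\<lambda>x. \<Sum>i<Suc k. cs i x)"
      and wa: "real (weight (Suc k) n a) \<ge> \<rho> * (\<Sum>i<Suc k. real (n i) * real (colweight (Suc k) n i (cs i)))"
      by (elim exE conjE)
    define b where "b = contr k n (z k) (cs k)"
    have csB: "\<forall>i<k. cs i \<in> colspace (Suc k) n i (Blow (n i) (d i))"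
    proof (intro allI impI)
      fix i assume i: "i < k"
      then have "cs i \<in> colspace (Suc k) n i (V i)" using cs by simp
      then show "cs i \<in> colspace (Suc k) n i (Blow (n i) (d i))" using i by (simp add: V_def)
    qed
    have db: "dot k n (etensor k n z) b \<noteq> 0"
      using step_dot[OF zz csB asum] dt by (simp add: b_def)
    have bA: "0 < k \<longrightarrow> b \<in> Aset k n d"
      using step_mem[OF zz aA csB asum] by (simp add: b_def)
    have IH: "P \<le> real (weight k n b)"
    proof -
      have c1: "\<forall>i<k. is_complex (n i) (d i)" using cx by simp
      have c2: "\<forall>i<k. z i \<in> Zup (n i) (d i)" using zz by simp
      show ?thesis using Suc.IH[OF c1 c2 bA db] unfolding P_def .
    qed
    have w1: "1 \<le> real (weight k n b)" using weight_ge1[OF db] by simp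
    have wc: "real (weight k n b) \<le> real (colweight (Suc k) n k (cs k))"
      using weight_contr[where k=k and n=n and w="z k" and f="cs k", OF nk] by (simp add: b_def)
    have "real (n k) * real (colweight (Suc k) n k (cs k)) \<le>
        (\<Sum>i<Suc k. real (n i) * real (colweight (Suc k) n i (cs i)))"
      by (rule member_le_sum) auto
    then have "\<rho> * (real (n k) * real (colweight (Suc k) n k (cs k))) \<le>
        \<rho> * (\<Sum>i<Suc k. real (n i) * real (colweight (Suc k) n i (cs i)))"
      using r0 by (rule mult_left_mono)
    moreover have "\<rho> * real (n k) * real (weight k n b) \<le> \<rho> * (real (n k) * real (colweight (Suc k) n k (cs k)))"
    proof -
      have "0 \<le> \<rho> * real (n k)" using r0 by simp
      then have "\<rho> * real (n k) * real (weight k n b) \<le> \<rho> * real (n k) * real (colweight (Suc k) n k (cs k))"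
        using wc by (rule mult_left_mono[rotated])
      then show ?thesis by (simp add: mult.assoc)
    qed
    ultimately have "\<rho> * real (n k) * real (weight k n b) \<le> W"
      using wa unfolding W_def by linarith
    then show ?thesis using r0 IH w1 by blast
  qed
  have S0: "0 \<in> S"
    unfolding S_def pe_good_def
  proof (intro CollectI conjI ballI)
    fix c assume "c \<in> subsum (Suc k) (\<lambda>i. colspace (Suc k) n i (V i))"
    then obtain g where "\<forall>i<Suc k. g i \<in> colspace (Suc k) n i (V i)" "c = (\<lambda>x. \<Sum>i<Suc k. g i x)"
      unfolding subsum_def by blast
    then show "\<exists>cs. (\<forall>i<Suc k. cs i \<in> colspace (Suc k) n i (V i)) \<and> c = (\<lambda>x. \<Sum>i<Suc k. cs i x) \<and>
             real (weight (Suc k) n c) \<ge> 0 * (\<Sum>i<Suc k. real (n i) * real (colweight (Suc k) n i (cs i)))"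
      by (intro exI[of _ g]) simp
  qed simp
  have bd: "\<rho> \<le> W" if rS: "\<rho> \<in> S" for \<rho>
  proof -
    obtain w where w: "1 \<le> w" "\<rho> * real (n k) * w \<le> W" and r0: "0 \<le> \<rho>" using key[OF rS] by blast
    have "1 \<le> real (n k)" using nk by simp
    then have "1 * 1 \<le> real (n k) * w" using w(1) by (intro mult_mono) auto
    then have "1 \<le> real (n k) * w" by simp
    then have "\<rho> \<le> \<rho> * (real (n k) * w)" using r0 by (simp add: mult_le_cancel_left1)
    then show ?thesis using w by (simp add: mult.assoc)
  qed
  have bdd: "bdd_above S" unfolding bdd_above_def using bd by blast
  have pe: "product_expansion (Suc k) n V = Sup S" by (simp add: product_expansion_def S_def)
  have pe0: "0 \<le> Sup S" using cSup_upper[OF S0 bdd] .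
  have goal: "P * (Sup S * real (n k)) \<le> W"
  proof (cases "P \<le> 0")
    case True
    have "0 \<le> W" by (simp add: W_def)
    moreover have "P * (Sup S * real (n k)) \<le> 0" using True pe0 by (simp add: mult_nonpos_nonneg)
    ultimately show ?thesis by linarith
  next
    case False
    have nkP: "0 < real (n k) * P" using False nk by simp
    have "\<rho> \<le> W / (real (n k) * P)" if rS: "\<rho> \<in> S" for \<rho>
    proof -
      obtain w where w: "P \<le> w" "\<rho> * real (n k) * w \<le> W" and r0: "0 \<le> \<rho>" using key[OF rS] by blast
      have "\<rho> * real (n k) * P \<le> \<rho> * real (n k) * w" using r0 w(1) by (simp add: mult_left_mono)
      then have "\<rho> * (real (n k) * P) \<le> W" using w(2) by (simp add: mult.assoc)
      then show ?thesis using nkP by (simp add: pos_le_divide_eq)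
    qed
    then have "Sup S \<le> W / (real (n k) * P)" using S0 by (intro cSup_least) auto
    then have "Sup S * (real (n k) * P) \<le> W" using nkP by (simp add: pos_le_divide_eq)
    then show ?thesis by (simp add: mult_ac)
  qed
  have pr: "(\<Prod>i<Suc k. product_expansion (Suc i) n
               (\<lambda>j. if j < i then Blow (n j) (d j) else Zlow (n j) (d j)) * real (n i))
     = P * (product_expansion (Suc k) n V * real (n k))"
    unfolding P_def V_def by (rule prod.lessThan_Suc)
  show ?case unfolding pr pe using goal unfolding W_def .
qed


theorem lemma4p6:
  fixes t :: nat and n :: "nat \<Rightarrow> nat"
    and d :: "nat \<Rightarrow> nat \<Rightarrow> nat \<Rightarrow> 'a::{finite,field}"
    and a :: "(nat \<Rightarrow> nat) \<Rightarrow> 'a" and z :: "nat \<Rightarrow> nat \<Rightarrow> 'a"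
  assumes "CHAR('a) = 2"
    and "\<forall>i<t. is_complex (n i) (d i)"
    and "a \<in> {(\<lambda>x. u x + v x) | u v. u \<in> tensor_space t n (\<lambda>i. Zlow (n i) (d i)) \<and>
                          v \<in> subsum t (\<lambda>i. colspace t n i (Blow (n i) (d i)))}"
    and "\<forall>i<t. z i \<in> Zup (n i) (d i)"
    and "dot t n (etensor t n z) a \<noteq> 0"
  shows "real (weight t n a) \<ge>
    (\<Prod>i<t. product_expansion (Suc i) n
               (\<lambda>j. if j < i then Blow (n j) (d j) else Zlow (n j) (d j)) * real (n i))"
proof -
  have aA: "0 < t \<longrightarrow> a \<in> Aset t n d" using assms(3) unfolding Aset_def by simp
  show ?thesis by (rule main[where t=t and n=n and d=d and z=z and a=a, OF assms(2) assms(4) aA assms(5)])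
qed

end
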